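(* Let $H$ be a real Hilbert space with inner product $(\cdot,\cdot)_H$ and norm $\|\cdot\|_H$. Let $\mathcal{L}$ be a symmetric positive definite linear operator on $H$ and $f:H\to\mathbb{R}$ Fréchet differentiable with $\nabla f$ Lipschitz continuous with constant $L$. For each $\Phi\in H$ let $\mathbf{L}(\Phi)=\mathbf{M}(\Phi)+\mathbf{S}(\Phi)$ with $\mathbf{S}(\Phi)$ skew-symmetric and $-\mathbf{M}(\Phi)$ symmetric positive definite, and assume there are constants $\alpha_{\mathbf{M}},\beta_{\mathbf{S}}>0$ such that for all $\Phi,\Psi_1,\Psi_2,\Psi\in H$: $(\mathbf{S}(\Phi)\Psi_1,\Psi_2)_H\le\beta_{\mathbf{S}}\|\Psi_1\|_H\|\Psi_2\|_H$ and $(-\mathbf{M}(\Phi)\Psi,\Psi)_H\ge\alpha_{\mathbf{M}}\|\Psi\|_H^2$. Let $\tau>0$, $A>0$, let $\Phi^{n-1},\Phi^n\in H$ and $\hat\Phi^{n+\frac12}\in H$ be given, and suppose $\Phi^{n+1}$ satisfies the SGE-SCN scheme $$\frac{\Phi^{n+1}-\Phi^n}{\tau}=\mathbf{L}(\hat\Phi^{n+\frac12})\mu^{n+\frac12},\qquad \mu^{n+\frac12}=\mathcal{L}\Phi^{n+\frac12}-\tau A\,\mathbf{M}(\hat\Phi^{n+\frac12})(\Phi^{n+1}-\Phi^n)+\tfrac32\nabla f(\Phi^n)-\tfrac12\nabla f(\Phi^{n-1}),$$ with $\Phi^{n+\frac12}=\frac12(\Phi^{n+1}+\Phi^n)$.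 Define $$\tilde E_{CN}(\Phi^{k+1},\Phi^k)=\tfrac12\|\mathcal{L}^{1/2}\Phi^{k+1}\|_H^2+f(\Phi^{k+1})+\tfrac L4\|\Phi^{k+1}-\Phi^k\|_H^2 .$$ Then, provided $A\ge\frac{L^2}{4}\big(1+\frac{\beta_{\mathbf{S}}}{\alpha_{\mathbf{M}}}\big)^2$ (so that the right-hand side below is nonpositive), $$\tilde E_{CN}(\Phi^{n+1},\Phi^n)-\tilde E_{CN}(\Phi^n,\Phi^{n-1})\le-\Big(2\big(1+\tfrac{\beta_{\mathbf{S}}}{\alpha_{\mathbf{M}}}\big)^{-1}\sqrt A-L\Big)\|\Phi^{n+1}-\Phi^n\|_H^2 .$$
   Context: $\|\mathcal{L}^{1/2}\Phi\|_H^2=(\Phi,\mathcal{L}\Phi)_H$. Skew-symmetric: $(\mathbf{S}\Phi,\Psi)_H=-(\Phi,\mathbf{S}\Psi)_H$. *)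

theory Defs
  imports "HOL-Analysis.Analysis"
begin

definition sym_op :: "('a::real_inner \<Rightarrow> 'a) \<Rightarrow> bool" where
  "sym_op T \<longleftrightarrow> linear T \<and> (\<forall>x y. inner (T x) y = inner x (T y))"

definition skew_op :: "('a::real_inner \<Rightarrow> 'a) \<Rightarrow> bool" where
  "skew_op T \<longleftrightarrow> linear T \<and> (\<forall>x y. inner (T x) y = - inner x (T y))"

definition spd_op :: "('a::real_inner \<Rightarrow> 'a) \<Rightarrow> bool" where
  "spd_op T \<longleftrightarrow> sym_op T \<and> (\<forall>x. x \<noteq> 0 \<longrightarrow> inner (T x) x > 0)"

text \<open>Modified Crank-Nicolson energy; the term \<open>\<parallel>\<L>^{1/2}\<Phi>\<parallel>^2\<close> equals \<open>(\<Phi>, \<L>\<Phi>)\<close>.\<close>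
definition E_CN :: "('a::real_inner \<Rightarrow> 'a) \<Rightarrow> ('a \<Rightarrow> real) \<Rightarrow> real \<Rightarrow> 'a \<Rightarrow> 'a \<Rightarrow> real" where
  "E_CN Lop f L x1 x0 = (1/2) * inner x1 (Lop x1) + f x1 + (L/4) * (norm (x1 - x0))\<^sup>2"

end

theory Submission
  imports Defs
begin

lemma descent:
  fixes f :: "'a::real_inner \<Rightarrow> real" and gradf :: "'a \<Rightarrow> 'a"
  assumes fderiv: "\<And>x. (f has_derivative (\<lambda>h. inner (gradf x) h)) (at x)"
    and L: "0 \<le> L"
    and lip: "\<And>x y. norm (gradf x - gradf y) \<le> L * norm (x - y)"
  shows "f y - f x - inner (gradf x) (y - x) \<le> L / 2 * (norm (y - x))\<^sup>2"
proof -
  define d where "d = y - x"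
  define g where "g t = f (x + t *\<^sub>R d) - t * inner (gradf x) d - L/2 * t\<^sup>2 * (norm d)\<^sup>2" for t :: real
  have D: "(g has_real_derivative (inner (gradf (x + t *\<^sub>R d)) d - inner (gradf x) d - L * t * (norm d)\<^sup>2)) (at t)" for t
  proof -
    have l: "((\<lambda>t. x + t *\<^sub>R d) has_derivative (\<lambda>h. h *\<^sub>R d)) (at t)"
      by (auto intro!: derivative_eq_intros)
    have "((\<lambda>t. f (x + t *\<^sub>R d)) has_derivative (\<lambda>h. inner (gradf (x + t *\<^sub>R d)) (h *\<^sub>R d))) (at t)"
      using has_derivative_compose[OF l fderiv] by simp
    then have "((\<lambda>t. f (x + t *\<^sub>R d)) has_real_derivative inner (gradf (x + t *\<^sub>R d)) d) (at t)"
      unfolding has_field_derivative_def by (simp add: mult.commute[of _ "inner _ _"])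
    then show ?thesis unfolding g_def
      by (auto intro!: derivative_eq_intros)
  qed
  have "g 1 \<le> g 0"
  proof (rule DERIV_nonpos_imp_decreasing_open[of 0 1 g])
    fix t :: real assume t: "0 < t" "t < 1"
    have "inner (gradf (x + t *\<^sub>R d)) d - inner (gradf x) d = inner (gradf (x + t *\<^sub>R d) - gradf x) d"
      by (simp add: inner_diff_left)
    also have "\<dots> \<le> norm (gradf (x + t *\<^sub>R d) - gradf x) * norm d"
      by (rule norm_cauchy_schwarz)
    also have "\<dots> \<le> L * norm (t *\<^sub>R d) * norm d"
      using lip[of "x + t *\<^sub>R d" x] by (simp add: mult_right_mono)
    also have "\<dots> = L * t * (norm d)\<^sup>2" using t by (simp add: power2_eq_square)
    finally show "\<exists>y. DERIV g t :> y \<and> y \<le> 0" using D[of t] by (intro exI[of _ "inner (gradf (x + t *\<^sub>R d)) d - inner (gradf x) d - L * t * (norm d)\<^sup>2"]) auto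
  next
    show "continuous_on {0..1} g"
      using D by (meson DERIV_isCont continuous_at_imp_continuous_on)
  qed simp
  then show ?thesis unfolding g_def d_def by simp
qed

lemma real_core:
  fixes a b p m n \<alpha> \<beta> \<tau> A :: real
  assumes "p\<^sup>2 \<le> a * b" "\<alpha> * m\<^sup>2 \<le> a" "\<alpha> * n\<^sup>2 \<le> b" "n\<^sup>2 \<le> \<tau> * (\<bar>p\<bar> + \<beta> * m * n)"
    "\<alpha> > 0" "\<beta> > 0" "\<tau> > 0" "A > 0" "m \<ge> 0" "n \<ge> 0"
  shows "2 * inverse (1 + \<beta> / \<alpha>) * sqrt A * n\<^sup>2 \<le> \<tau> * a + \<tau> * A * b"
proof -
  have a0: "a \<ge> 0" using assms(2,5) order_trans[OF _ assms(2), of 0] by simp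
  have b0: "b \<ge> 0" using assms(3,5) order_trans[OF _ assms(3), of 0] by simp
  define X where "X = sqrt (a * b)"
  have X0: "X \<ge> 0" unfolding X_def using a0 b0 by simp
  have pX: "\<bar>p\<bar> \<le> X" unfolding X_def using assms(1) by (intro real_le_rsqrt) simp
  have "(\<alpha> * m * n)\<^sup>2 = (\<alpha> * m\<^sup>2) * (\<alpha> * n\<^sup>2)" by (simp add: power2_eq_square)
  also have "\<dots> \<le> a * b" using assms(2,3,5) by (simp add: mult_mono a0)
  finally have mnX: "\<alpha> * m * n \<le> X" unfolding X_def
    by (metis real_le_rsqrt)
  have "\<alpha> * n\<^sup>2 \<le> \<tau> * (\<alpha> * \<bar>p\<bar> + \<beta> * (\<alpha> * m * n))"
    using mult_left_mono[OF assms(4), of \<alpha>] assms(5) by (simp add: algebra_simps)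
  also have "\<dots> \<le> \<tau> * (\<alpha> * X + \<beta> * X)"
    using pX mnX assms by (intro mult_left_mono add_mono) auto
  finally have n2: "\<alpha> * n\<^sup>2 \<le> \<tau> * X * (\<alpha> + \<beta>)" by (simp add: algebra_simps)
  have amgm: "2 * sqrt A * (\<tau> * X) \<le> \<tau> * a + \<tau> * A * b"
  proof -
    have "0 \<le> \<tau> * (sqrt a - sqrt A * sqrt b)\<^sup>2" using assms by simp
    also have "\<dots> = \<tau> * a + \<tau> * A * b - 2 * sqrt A * (\<tau> * X)"
      using a0 b0 assms(8) unfolding X_def
      by (simp add: power2_diff power_mult_distrib real_sqrt_mult algebra_simps)
    finally show ?thesis by simp
  qed
  have "inverse (1 + \<beta> / \<alpha>) = \<alpha> / (\<alpha> + \<beta>)" using assms(5,6)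
    by (simp add: field_simps)
  then have "2 * inverse (1 + \<beta> / \<alpha>) * sqrt A * n\<^sup>2 = 2 * sqrt A * (\<alpha> * n\<^sup>2 / (\<alpha> + \<beta>))" by simp
  also have "\<dots> \<le> 2 * sqrt A * (\<tau> * X)"
    using n2 assms(5,6,8) by (intro mult_left_mono) (auto simp: divide_le_eq)
  finally show ?thesis using amgm by linarith
qed


theorem theorem3p8:
  fixes Lop :: "'a::{real_inner, complete_space} \<Rightarrow> 'a"
    and f :: "'a \<Rightarrow> real" and gradf :: "'a \<Rightarrow> 'a"
    and M S :: "'a \<Rightarrow> 'a \<Rightarrow> 'a"
    and L \<alpha>M \<beta>S \<tau> A :: real
    and \<Phi>m \<Phi>0 \<Phi>1 \<Phi>hat :: 'a
  assumes Lop: "spd_op Lop"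
    and fderiv: "\<And>x. (f has_derivative (\<lambda>h. inner (gradf x) h)) (at x)"
    and L_nonneg: "0 \<le> L"
    and lip: "\<And>x y. norm (gradf x - gradf y) \<le> L * norm (x - y)"
    and S_skew: "\<And>\<Phi>. skew_op (S \<Phi>)"
    and M_neg: "\<And>\<Phi>. spd_op (\<lambda>\<Psi>. - M \<Phi> \<Psi>)"
    and \<alpha>_pos: "\<alpha>M > 0" and \<beta>_pos: "\<beta>S > 0"
    and S_bound: "\<And>\<Phi> \<Psi>1 \<Psi>2. inner (S \<Phi> \<Psi>1) \<Psi>2 \<le> \<beta>S * norm \<Psi>1 * norm \<Psi>2"
    and M_coerc: "\<And>\<Phi> \<Psi>. inner (- M \<Phi> \<Psi>) \<Psi> \<ge> \<alpha>M * (norm \<Psi>)\<^sup>2"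
    and \<tau>_pos: "\<tau> > 0" and A_pos: "A > 0"
    and scheme: "(1/\<tau>) *\<^sub>R (\<Phi>1 - \<Phi>0) = M \<Phi>hat \<mu> + S \<Phi>hat \<mu>"
    and mu_def: "\<mu> = Lop ((1/2) *\<^sub>R (\<Phi>1 + \<Phi>0)) - (\<tau> * A) *\<^sub>R M \<Phi>hat (\<Phi>1 - \<Phi>0)
                    + (3/2) *\<^sub>R gradf \<Phi>0 - (1/2) *\<^sub>R gradf \<Phi>m"
    and A_large: "A \<ge> L\<^sup>2 / 4 * (1 + \<beta>S / \<alpha>M)\<^sup>2"
  shows "E_CN Lop f L \<Phi>1 \<Phi>0 - E_CN Lop f L \<Phi>0 \<Phi>m
           \<le> - (2 * inverse (1 + \<beta>S / \<alpha>M) * sqrt A - L) * (norm (\<Phi>1 - \<Phi>0))\<^sup>2"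
proof -
  define d where "d = \<Phi>1 - \<Phi>0"
  define e where "e = \<Phi>0 - \<Phi>m"
  define P where "P = (\<lambda>\<Psi>. - M \<Phi>hat \<Psi>)"
  define Sh where "Sh = S \<Phi>hat"
  have Psym: "sym_op P" using M_neg[of \<Phi>hat] unfolding spd_op_def P_def by auto
  have Plin: "linear P" using Psym unfolding sym_op_def by auto
  have Psy: "inner (P x) y = inner x (P y)" for x y using Psym unfolding sym_op_def by auto
  have Pco: "inner (P x) x \<ge> \<alpha>M * (norm x)\<^sup>2" for x using M_coerc unfolding P_def by auto
  have Mh: "M \<Phi>hat x = - P x" for x unfolding P_def by simp
  have Shk: "inner (Sh x) x = 0" for x
    using S_skew[of \<Phi>hat] unfolding skew_op_def Sh_def by (metis inner_commute add.inverse_unique add_eq_0_iff_both_eq_0 neg_equal_zero)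
  have Llin: "linear Lop" and Lsy: "\<And>x y. inner (Lop x) y = inner x (Lop y)"
    using Lop unfolding spd_op_def sym_op_def by auto
  have dmu: "d = \<tau> *\<^sub>R (- P \<mu> + Sh \<mu>)"
  proof -
    have "d = \<tau> *\<^sub>R ((1/\<tau>) *\<^sub>R (\<Phi>1 - \<Phi>0))" using \<tau>_pos unfolding d_def by simp
    also have "\<dots> = \<tau> *\<^sub>R (- P \<mu> + Sh \<mu>)" unfolding scheme Sh_def Mh by simp
    finally show ?thesis .
  qed
  define a where "a = inner (P \<mu>) \<mu>"
  define b where "b = inner (P d) d"
  define p where "p = inner (P \<mu>) d"
  have st1: "inner \<mu> d = - \<tau> * a"
  proof -
    have "inner \<mu> d = \<tau> * (inner \<mu> (Sh \<mu>) - inner \<mu> (P \<mu>))"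
      unfolding dmu by (simp add: inner_diff_right)
    moreover have "inner \<mu> (Sh \<mu>) = 0" using Shk[of \<mu>] by (simp add: inner_commute)
    moreover have "inner \<mu> (P \<mu>) = a" unfolding a_def by (simp add: inner_commute)
    ultimately show ?thesis by simp
  qed
  have st2: "inner \<mu> d = inner (Lop ((1/2) *\<^sub>R (\<Phi>1 + \<Phi>0))) d + \<tau> * A * b
      + (3/2) * inner (gradf \<Phi>0) d - (1/2) * inner (gradf \<Phi>m) d"
    unfolding mu_def b_def d_def Mh
    by (simp add: inner_add_left inner_diff_left inner_minus_left)
  have Lh: "Lop ((1/2) *\<^sub>R (\<Phi>1 + \<Phi>0)) = (1/2) *\<^sub>R (Lop \<Phi>1 + Lop \<Phi>0)"
    using Llin by (simp add: linear_add linear_scale)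
  have st3: "E_CN Lop f L \<Phi>1 \<Phi>0 - E_CN Lop f L \<Phi>0 \<Phi>m =
     inner (Lop ((1/2) *\<^sub>R (\<Phi>1 + \<Phi>0))) d + f \<Phi>1 - f \<Phi>0 + L/4 * ((norm d)\<^sup>2 - (norm e)\<^sup>2)"
  proof -
    have "inner \<Phi>1 (Lop \<Phi>0) = inner \<Phi>0 (Lop \<Phi>1)"
      using Lsy[of \<Phi>1 \<Phi>0] by (simp add: inner_commute)
    then show ?thesis unfolding E_CN_def Lh d_def e_def
      by (simp add: inner_add_left inner_diff_right inner_commute algebra_simps)
  qed
  have st4: "f \<Phi>1 - f \<Phi>0 - inner (gradf \<Phi>0) d \<le> L / 2 * (norm d)\<^sup>2"
    using descent[OF fderiv L_nonneg lip, of \<Phi>1 \<Phi>0] unfolding d_def .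
  have st5: "- (1/2) * inner (gradf \<Phi>0 - gradf \<Phi>m) d \<le> L/4 * ((norm e)\<^sup>2 + (norm d)\<^sup>2)"
  proof -
    have "- inner (gradf \<Phi>0 - gradf \<Phi>m) d \<le> norm (gradf \<Phi>0 - gradf \<Phi>m) * norm d"
      by (metis norm_cauchy_schwarz abs_ge_minus_self Cauchy_Schwarz_ineq2 order.trans inner_minus_left)
    also have "\<dots> \<le> L * norm e * norm d"
      using lip[of \<Phi>0 \<Phi>m] unfolding e_def by (simp add: mult_right_mono)
    also have "\<dots> \<le> L/2 * ((norm e)\<^sup>2 + (norm d)\<^sup>2)"
    proof -
      have "2 * (norm e * norm d) \<le> (norm e)\<^sup>2 + (norm d)\<^sup>2"
        using sum_squares_bound[of "norm e" "norm d"] by (simp add: mult.assoc)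
      then show ?thesis using L_nonneg
        using mult_left_mono[of "2 * (norm e * norm d)" "(norm e)\<^sup>2 + (norm d)\<^sup>2" "L/2"] by simp
    qed
    finally show ?thesis by simp
  qed
  have main1: "E_CN Lop f L \<Phi>1 \<Phi>0 - E_CN Lop f L \<Phi>0 \<Phi>m \<le> - \<tau> * a - \<tau> * A * b + L * (norm d)\<^sup>2"
    using st1 st2 st3 st4 st5 by (simp add: inner_diff_left algebra_simps)
  have CS: "p\<^sup>2 \<le> a * b"
  proof (cases "b = 0")
    case True
    then have "d = 0" using Pco[of d] \<alpha>_pos unfolding b_def
      by (simp add: zero_le_mult_iff mult_le_0_iff)
    then show ?thesis unfolding p_def by (simp add: True)
  next
    case False
    have b0: "b > 0" using Pco[of d] \<alpha>_pos False unfolding b_def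
      by (metis order.order_iff_strict order_trans zero_le_mult_iff zero_le_power2 less_imp_le)
    define t where "t = p / b"
    have "0 \<le> inner (P (\<mu> - t *\<^sub>R d)) (\<mu> - t *\<^sub>R d)"
      using Pco[of "\<mu> - t *\<^sub>R d"] \<alpha>_pos using order_trans[OF _ Pco[of "\<mu> - t *\<^sub>R d"], of 0] by simp
    also have "\<dots> = a - 2 * t * p + t\<^sup>2 * b"
    proof -
      have "inner (P d) \<mu> = p" unfolding p_def using Psy[of d \<mu>] by (simp add: inner_commute)
      then show ?thesis unfolding a_def b_def p_def
        by (simp add: linear_diff[OF Plin] linear_scale[OF Plin] inner_diff_left inner_diff_right
            power2_eq_square algebra_simps)
    qed
    also have "\<dots> = a - p\<^sup>2 / b" unfolding t_def using b0
      by (simp add: field_simps power2_eq_square)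
    finally have "p\<^sup>2 / b \<le> a" by simp
    then show ?thesis using b0 by (simp add: divide_le_eq mult.commute)
  qed
  have nd: "(norm d)\<^sup>2 \<le> \<tau> * (\<bar>p\<bar> + \<beta>S * norm \<mu> * norm d)"
  proof -
    have "(norm d)\<^sup>2 = inner d d" by (simp add: power2_norm_eq_inner)
    also have "\<dots> = \<tau> * (- p + inner (Sh \<mu>) d)"
      by (subst (1) dmu) (simp add: p_def inner_add_left inner_minus_left inner_diff_left)
    also have "\<dots> \<le> \<tau> * (\<bar>p\<bar> + \<beta>S * norm \<mu> * norm d)"
      using S_bound[of \<Phi>hat \<mu> d] \<tau>_pos unfolding Sh_def
      by (intro mult_left_mono) auto
    finally show ?thesis .
  qed
  have core: "2 * inverse (1 + \<beta>S / \<alpha>M) * sqrt A * (norm d)\<^sup>2 \<le> \<tau> * a + \<tau> * A * b"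
  proof (rule real_core[OF CS _ _ nd \<alpha>_pos \<beta>_pos \<tau>_pos A_pos])
    show "\<alpha>M * (norm \<mu>)\<^sup>2 \<le> a" unfolding a_def by (rule Pco)
    show "\<alpha>M * (norm d)\<^sup>2 \<le> b" unfolding b_def by (rule Pco)
  qed simp_all
  have nn: "norm (\<Phi>1 - \<Phi>0) = norm d" by (simp add: d_def)
  have "- (2 * inverse (1 + \<beta>S / \<alpha>M) * sqrt A - L) * (norm d)\<^sup>2
      = - (2 * inverse (1 + \<beta>S / \<alpha>M) * sqrt A * (norm d)\<^sup>2) + L * (norm d)\<^sup>2"
    by (simp add: algebra_simps)
  then show ?thesis unfolding nn using main1 core by linarith
qed

end
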